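(* Consider the stochastic bipartite matching model described in the context, under the stability condition, with stationary distribution $\pi$. Then for every $\mathcal{A} \in \mathcal{J}$, \[ \Delta(\mathcal{A})\, \pi(\mathcal{A}) = \mu(\mathcal{A}\cap\mathcal{K}) \sum_{i \in \mathcal{A}\cap\mathcal{I}} \lambda_i\, \pi(\mathcal{A}\setminus\{i\}) + \lambda(\mathcal{A}\cap\mathcal{I}) \sum_{k \in \mathcal{A}\cap\mathcal{K}} \mu_k\, \pi(\mathcal{A}\setminus\{k\}) + \sum_{i \in \mathcal{A}\cap\mathcal{I}} \sum_{k\in\mathcal{A}\cap\mathcal{K}} \lambda_i \mu_k\, \pi(\mathcal{A}\setminus\{i,k\}). \]
   Context: Let $\mathcal{I}$ (customer classes) and $\mathcal{K}$ (server classes) be disjoint finite non-empty sets, and consider a connected bipartite graph (the compatibility graph) on $\mathcal{I}\cup\mathcal{K}$ whose edges all join an element of $\mathcal{I}$ to an element of $\mathcal{K}$; write $i\sim k$ if $i\in\mathcal{I}$ and $k\in\mathcal{K}$ are adjacent and $i\nsim k$ otherwise. For $i\in\mathcal{I}$ let $\mathcal{K}_i=\{k\in\mathcal{K}: i\sim k\}$ and for $k\in\mathcal{K}$ let $\mathcal{I}_k=\{i\in\mathcal{I}: i\sim k\}$. Let $\lambda_i>0$ ($i\in\mathcal{I}$) and $\mu_k>0$ ($k\in\mathcal{K}$) with $\sum_i\lambda_i=\sum_k\mu_k=1$. For $\mathcal{A}\subseteq\mathcal{I}$ write $\lambda(\mathcal{A})=\sum_{i\in\mathcal{A}}\lambda_i$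 and $\mathcal{K}(\mathcal{A})=\bigcup_{i\in\mathcal{A}}\mathcal{K}_i$; for $\mathcal{A}\subseteq\mathcal{K}$ write $\mu(\mathcal{A})=\sum_{k\in\mathcal{A}}\mu_k$ and $\mathcal{I}(\mathcal{A})=\bigcup_{k\in\mathcal{A}}\mathcal{I}_k$. Model: time is slotted; in each slot exactly one customer and one server arrive, the customer being of class $i$ with probability $\lambda_i$ and the server of class $k$ with probability $\mu_k$, independently within and across slots. Unmatched customers and unmatched servers wait in two queues in arrival order. Upon each arrival (first-come-first-matched policy): (1) the incoming customer is matched with the longest-waiting compatible unmatched server, if any; (2) the incoming server is matched with the longest-waiting compatible unmatched customer, if any; (3) if neither can be matched with a waiting item, they are matched with each other if compatible; (4) any incoming item still unmatched is appended to the back of its queue. Matched items leave immediately. The state is $(c,d)$ with $c=(c_1,\dots,c_n)$ the classes of unmatched customers and $d=(d_1,\dots,d_n)$ the classes of unmatched servers, in arrival order (the two lengths are always equal); the state space is $\Pi=\bigcup_{n\ge0}\{(c,d)\in\mathcal{I}^n\times\mathcal{K}^n: c_p\nsim d_q\ \forall p,q\}$, and $\varnothing$ denotes the empty state. Stability condition (assumed): $\lambda(\mathcal{A})<\mu(\mathcal{K}(\mathcal{A}))$ for every non-empty $\mathcal{A}\subsetneq\mathcal{I}$ (equivalently $\mu(\mathcal{A})<\lambda(\mathcal{I}(\mathcal{A}))$ for every non-empty $\mathcal{A}\subsetneq\mathcal{K}$). Then the Markov chain of states is ergodic with stationary distribution $\pi(c,d)=\pi(\varnothing)\prod_{p=1}^n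 \frac{\lambda_{c_p}}{\mu(\mathcal{K}(\{c_1,\dots,c_p\}))}\frac{\mu_{d_p}}{\lambda(\mathcal{I}(\{d_1,\dots,d_p\}))}$, $(c,d)\in\Pi$. Let $\mathcal{J}$ be the family of independent sets $\mathcal{A}\subseteq\mathcal{I}\cup\mathcal{K}$ of the compatibility graph such that $\mathcal{A}\cap\mathcal{I}$ and $\mathcal{A}\cap\mathcal{K}$ are both non-empty, and $\mathcal{J}_0=\mathcal{J}\cup\{\emptyset\}$. For $\mathcal{A}\in\mathcal{J}_0$, let $\Pi_{\mathcal{A}}$ be the set of $(c,d)\in\Pi$ with $\{c_1,\dots,c_n\}=\mathcal{A}\cap\mathcal{I}$ and $\{d_1,\dots,d_n\}=\mathcal{A}\cap\mathcal{K}$, and $\pi(\mathcal{A})=\sum_{(c,d)\in\Pi_{\mathcal{A}}}\pi(c,d)$; by convention $\pi(\mathcal{A})=0$ if $\mathcal{A}\notin\mathcal{J}_0$. For $\mathcal{A}\in\mathcal{J}$, $\Delta(\mathcal{A})=\mu(\mathcal{K}(\mathcal{A}\cap\mathcal{I}))\,\lambda(\mathcal{I}(\mathcal{A}\cap\mathcal{K}))-\lambda(\mathcal{A}\cap\mathcal{I})\,\mu(\mathcal{A}\cap\mathcal{K})$. *)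

theory Defs
  imports "HOL-Analysis.Analysis"
begin

text \<open>Customer classes are the elements of a finite type 'i, server classes those of a
finite type 'k; the compatibility graph is the relation cmp i k (i ~ k).\<close>

definition Kset :: "('i \<Rightarrow> 'k \<Rightarrow> bool) \<Rightarrow> 'i set \<Rightarrow> 'k set" where
  "Kset cmp A = {k. \<exists>i\<in>A. cmp i k}"

definition Iset :: "('i \<Rightarrow> 'k \<Rightarrow> bool) \<Rightarrow> 'k set \<Rightarrow> 'i set" where
  "Iset cmp B = {i. \<exists>k\<in>B. cmp i k}"

fun adj :: "('i \<Rightarrow> 'k \<Rightarrow> bool) \<Rightarrow> 'i + 'k \<Rightarrow> 'i + 'k \<Rightarrow> bool" where
  "adj cmp (Inl i) (Inr k) = cmp i k"
| "adj cmp (Inr k) (Inl i) = cmp i k"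
| "adj cmp _ _ = False"

definition graph_connected :: "('i \<Rightarrow> 'k \<Rightarrow> bool) \<Rightarrow> bool" where
  "graph_connected cmp \<longleftrightarrow> (\<forall>x y. (adj cmp)\<^sup>*\<^sup>* x y)"

definition states :: "('i \<Rightarrow> 'k \<Rightarrow> bool) \<Rightarrow> ('i list \<times> 'k list) set" where
  "states cmp = {(c, d). length c = length d \<and> (\<forall>x\<in>set c. \<forall>y\<in>set d. \<not> cmp x y)}"

definition weight :: "('i \<Rightarrow> real) \<Rightarrow> ('k \<Rightarrow> real) \<Rightarrow> ('i \<Rightarrow> 'k \<Rightarrow> bool)
    \<Rightarrow> 'i list \<times> 'k list \<Rightarrow> real" where
  "weight lam mu cmp s =
     (\<Prod>p<length (fst s).
        lam (fst s ! p) / sum mu (Kset cmp (set (take (Suc p) (fst s))))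
      * (mu (snd s ! p) / sum lam (Iset cmp (set (take (Suc p) (snd s))))))"

text \<open>Stationary distribution: pi(empty) is the normalising constant.\<close>
definition stat :: "('i \<Rightarrow> real) \<Rightarrow> ('k \<Rightarrow> real) \<Rightarrow> ('i \<Rightarrow> 'k \<Rightarrow> bool)
    \<Rightarrow> 'i list \<times> 'k list \<Rightarrow> real" where
  "stat lam mu cmp s = weight lam mu cmp s / infsum (weight lam mu cmp) (states cmp)"

text \<open>pi(A) for A given by its customer part AI and server part AK.\<close>
definition piA :: "('i \<Rightarrow> real) \<Rightarrow> ('k \<Rightarrow> real) \<Rightarrow> ('i \<Rightarrow> 'k \<Rightarrow> bool)
    \<Rightarrow> 'i set \<Rightarrow> 'k set \<Rightarrow> real" where
  "piA lam mu cmp AI AK =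
     infsum (stat lam mu cmp) {s \<in> states cmp. set (fst s) = AI \<and> set (snd s) = AK}"

definition Delta :: "('i \<Rightarrow> real) \<Rightarrow> ('k \<Rightarrow> real) \<Rightarrow> ('i \<Rightarrow> 'k \<Rightarrow> bool)
    \<Rightarrow> 'i set \<Rightarrow> 'k set \<Rightarrow> real" where
  "Delta lam mu cmp AI AK =
     sum mu (Kset cmp AI) * sum lam (Iset cmp AK) - sum lam AI * sum mu AK"

end

theory Submission
  imports Defs
begin

lemma weight_snoc:
  assumes "length c = length d"
  shows "weight lam mu cmp (c@[i], d@[k]) = weight lam mu cmp (c,d) *
     (lam i / sum mu (Kset cmp (insert i (set c))) * (mu k / sum lam (Iset cmp (insert k (set d)))))"
proof -
  have eq: "(\<Prod>p<length c.
        lam ((c@[i]) ! p) / sum mu (Kset cmp (set (take (Suc p) (c@[i]))))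
      * (mu ((d@[k]) ! p) / sum lam (Iset cmp (set (take (Suc p) (d@[k])))))) =
      (\<Prod>p<length c.
        lam (c ! p) / sum mu (Kset cmp (set (take (Suc p) c)))
      * (mu (d ! p) / sum lam (Iset cmp (set (take (Suc p) d)))))"
    by (rule prod.cong) (use assms in \<open>auto simp: nth_append\<close>)
  have "weight lam mu cmp (c@[i], d@[k]) = (\<Prod>p<length c.
        lam ((c@[i]) ! p) / sum mu (Kset cmp (set (take (Suc p) (c@[i]))))
      * (mu ((d@[k]) ! p) / sum lam (Iset cmp (set (take (Suc p) (d@[k])))))) *
      (lam ((c@[i]) ! length c) / sum mu (Kset cmp (set (take (Suc (length c)) (c@[i]))))
      * (mu ((d@[k]) ! length c) / sum lam (Iset cmp (set (take (Suc (length c)) (d@[k]))))))"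
    by (simp only: weight_def fst_conv snd_conv length_append_singleton prod.lessThan_Suc)
  also have "\<dots> = weight lam mu cmp (c,d) *
     (lam i / sum mu (Kset cmp (insert i (set c))) * (mu k / sum lam (Iset cmp (insert k (set d)))))"
    unfolding eq weight_def using assms by (simp add: nth_append)
  finally show ?thesis .
qed

lemma alg: fixes lam :: "'i \<Rightarrow> real" and mu :: "'k \<Rightarrow> real"
  shows "(\<Sum>i\<in>A. \<Sum>k\<in>B. lam i * mu k * (a + b i + c k + e i k)) =
   sum lam A * sum mu B * a + sum mu B * (\<Sum>i\<in>A. lam i * b i) + sum lam A * (\<Sum>k\<in>B. mu k * c k)
   + (\<Sum>i\<in>A. \<Sum>k\<in>B. lam i * mu k * e i k)"
proof -
  have "(\<Sum>i\<in>A. \<Sum>k\<in>B. lam i * mu k * (a + b i + c k + e i k)) =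
     (\<Sum>i\<in>A. \<Sum>k\<in>B. lam i * mu k * a) + (\<Sum>i\<in>A. \<Sum>k\<in>B. lam i * mu k * b i)
   + (\<Sum>i\<in>A. \<Sum>k\<in>B. lam i * mu k * c k) + (\<Sum>i\<in>A. \<Sum>k\<in>B. lam i * mu k * e i k)"
    by (simp only: distrib_left sum.distrib)
  moreover have "(\<Sum>i\<in>A. \<Sum>k\<in>B. lam i * mu k * a) = (\<Sum>i\<in>A. lam i * sum mu B * a)"
    by (rule sum.cong) (simp_all add: sum_distrib_left sum_distrib_right)
  moreover have "(\<Sum>i\<in>A. lam i * sum mu B * a) = sum lam A * sum mu B * a"
    by (simp add: sum_distrib_right)
  moreover have "(\<Sum>i\<in>A. \<Sum>k\<in>B. lam i * mu k * b i) = sum mu B * (\<Sum>i\<in>A. lam i * b i)"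
    by (simp add: sum_distrib_left sum_distrib_right mult_ac)
  moreover have "(\<Sum>i\<in>A. \<Sum>k\<in>B. lam i * mu k * c k) = (\<Sum>i\<in>A. lam i * (\<Sum>k\<in>B. mu k * c k))"
    by (rule sum.cong) (simp_all add: sum_distrib_left mult.assoc)
  moreover have "(\<Sum>i\<in>A. lam i * (\<Sum>k\<in>B. mu k * c k)) = sum lam A * (\<Sum>k\<in>B. mu k * c k)"
    by (simp add: sum_distrib_right)
  ultimately show ?thesis by simp
qed

definition SS :: "('i \<Rightarrow> 'k \<Rightarrow> bool) \<Rightarrow> 'i set \<Rightarrow> 'k set \<Rightarrow> ('i list \<times> 'k list) set" where
  "SS cmp A B = {s \<in> states cmp. set (fst s) = A \<and> set (snd s) = B}"

lemma SS_sub: "SS cmp A B \<subseteq> states cmp"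
  unfolding SS_def by auto

lemma main_W:
  fixes lam :: "'i::finite \<Rightarrow> real" and mu :: "'k::finite \<Rightarrow> real" and cmp :: "'i \<Rightarrow> 'k \<Rightarrow> bool"
  defines "w \<equiv> weight lam mu cmp"
  assumes summ: "w summable_on states cmp"
    and AI_ne: "AI \<noteq> {}" and AK_ne: "AK \<noteq> {}"
    and indep: "\<forall>i\<in>AI. \<forall>k\<in>AK. \<not> cmp i k"
    and DK: "sum mu (Kset cmp AI) \<noteq> 0" and DI: "sum lam (Iset cmp AK) \<noteq> 0"
  shows "sum mu (Kset cmp AI) * sum lam (Iset cmp AK) * infsum w (SS cmp AI AK) =
     sum lam AI * sum mu AK * infsum w (SS cmp AI AK)
   + sum mu AK * (\<Sum>i\<in>AI. lam i * infsum w (SS cmp (AI - {i}) AK))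
   + sum lam AI * (\<Sum>k\<in>AK. mu k * infsum w (SS cmp AI (AK - {k})))
   + (\<Sum>i\<in>AI. \<Sum>k\<in>AK. lam i * mu k * infsum w (SS cmp (AI - {i}) (AK - {k})))"
proof -
  let ?W = "\<lambda>A B. infsum w (SS cmp A B)"
  define U where "U = (\<lambda>(i::'i,k::'k). SS cmp AI AK \<union> SS cmp (AI-{i}) AK \<union> SS cmp AI (AK-{k}) \<union> SS cmp (AI-{i}) (AK-{k}))"
  define f where "f = (\<lambda>((i::'i,k::'k),(c::'i list,d::'k list)). (c@[i], d@[k]))"
  define T where "T = Sigma (AI \<times> AK) U"
  define D where "D = sum mu (Kset cmp AI) * sum lam (Iset cmp AK)"
  define cc where "cc = (\<lambda>i k. lam i / sum mu (Kset cmp AI) * (mu k / sum lam (Iset cmp AK)))"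
  have memU: "length c = length d \<and> insert i (set c) = AI \<and> insert k (set d) = AK \<and> (c,d) \<in> states cmp"
    if "i \<in> AI" "k \<in> AK" "(c,d) \<in> U (i,k)" for i k c d
  proof -
    have "(c,d) \<in> states cmp" "set c = AI \<or> set c = AI - {i}" "set d = AK \<or> set d = AK - {k}"
      using that(3) unfolding U_def SS_def by auto
    moreover have "insert i (set c) = AI" using calculation(2) that(1) by (metis insert_Diff insert_absorb)
    moreover have "insert k (set d) = AK" using calculation(3) that(2) by (metis insert_Diff insert_absorb)
    ultimately show ?thesis unfolding states_def by simp
  qed
  have inj: "inj_on f T"
    unfolding inj_on_def f_def T_def by auto
  have img: "f ` T = SS cmp AI AK"
  proof
    show "f ` T \<subseteq> SS cmp AI AK"
    proof
      fix x assume "x \<in> f ` T"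
      then obtain i k c d where ik: "i \<in> AI" "k \<in> AK" "(c,d) \<in> U (i,k)" and x: "x = (c@[i], d@[k])"
        unfolding T_def f_def by auto
      from memU[OF ik] have m: "length c = length d" "insert i (set c) = AI" "insert k (set d) = AK"
        "(c,d) \<in> states cmp" by auto
      show "x \<in> SS cmp AI AK"
        unfolding x SS_def states_def using m indep by auto
    qed
  next
    show "SS cmp AI AK \<subseteq> f ` T"
    proof
      fix x assume x: "x \<in> SS cmp AI AK"
      obtain c0 d0 where x0: "x = (c0,d0)" by force
      have st: "length c0 = length d0" "\<forall>a\<in>set c0. \<forall>b\<in>set d0. \<not> cmp a b" "set c0 = AI" "set d0 = AK"
        using x unfolding x0 SS_def states_def by auto
      have "c0 \<noteq> []" using st AI_ne by auto
      then obtain c i where c: "c0 = c @ [i]" by (metis rev_exhaust)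
      have "d0 \<noteq> []" using st AK_ne by auto
      then obtain d k where d: "d0 = d @ [k]" by (metis rev_exhaust)
      have i: "i \<in> AI" and k: "k \<in> AK" using st c d by auto
      have cd: "(c,d) \<in> states cmp" using st c d unfolding states_def by auto
      have sc: "insert i (set c) = AI" using st(3) c by simp
      have sd: "insert k (set d) = AK" using st(4) d by simp
      have "set c = AI \<or> set c = AI - {i}"
      proof (cases "i \<in> set c")
        case True then show ?thesis using sc by (simp add: insert_absorb)
      next
        case False then show ?thesis using sc by auto
      qed
      moreover have "set d = AK \<or> set d = AK - {k}"
      proof (cases "k \<in> set d")
        case True then show ?thesis using sd by (simp add: insert_absorb)
      next
        case False then show ?thesis using sd by auto
      qed
      ultimately have "(c,d) \<in> U (i,k)" using cd unfolding U_def SS_def by (simp; blast)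
      then have "((i,k),(c,d)) \<in> T" unfolding T_def using i k by auto
      moreover have "x = f ((i,k),(c,d))" unfolding f_def x0 c d by simp
      ultimately show "x \<in> f ` T" by blast
    qed
  qed
  have sS: "w summable_on SS cmp A B" for A B
    by (rule summable_on_subset_banach[OF summ SS_sub])
  have 1: "?W AI AK = infsum (w \<circ> f) T"
    using infsum_reindex[OF inj, of w] img by simp
  have sT: "(w \<circ> f) summable_on T"
    using summable_on_reindex[OF inj, of w] img sS by simp
  have 2: "infsum (w \<circ> f) T = (\<Sum>p\<in>AI\<times>AK. infsum (\<lambda>s. (w \<circ> f) (p,s)) (U p))"
    using infsum_Sigma_banach[of "w \<circ> f" "AI\<times>AK" U] sT unfolding T_def by simp
  have 3: "infsum (\<lambda>s. (w \<circ> f) ((i,k),s)) (U (i,k)) = cc i k * (?W AI AK + ?W (AI-{i}) AK + ?W AI (AK-{k}) + ?W (AI-{i}) (AK-{k}))"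
    if "i \<in> AI" "k \<in> AK" for i k
  proof -
    have "infsum (\<lambda>s. (w \<circ> f) ((i,k),s)) (U (i,k)) = infsum (\<lambda>s. w s * cc i k) (U (i,k))"
    proof (rule infsum_cong)
      fix s assume s: "s \<in> U (i,k)"
      obtain c d where sd: "s = (c,d)" by force
      from memU[OF that s[unfolded sd]] have m: "length c = length d" "insert i (set c) = AI" "insert k (set d) = AK" by auto
      show "(w \<circ> f) ((i,k),s) = w s * cc i k"
        unfolding sd f_def w_def cc_def using weight_snoc[OF m(1), of lam mu cmp i k] m by simp
    qed
    also have "\<dots> = infsum w (U (i,k)) * cc i k" by (rule infsum_cmult_left')
    also have "infsum w (U (i,k)) = ?W AI AK + ?W (AI-{i}) AK + ?W AI (AK-{k}) + ?W (AI-{i}) (AK-{k})"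
    proof -
      have d1: "SS cmp AI AK \<inter> SS cmp (AI-{i}) AK = {}" "(SS cmp AI AK \<union> SS cmp (AI-{i}) AK) \<inter> SS cmp AI (AK-{k}) = {}"
        "(SS cmp AI AK \<union> SS cmp (AI-{i}) AK \<union> SS cmp AI (AK-{k})) \<inter> SS cmp (AI-{i}) (AK-{k}) = {}"
      proof -
        have ne: "AI - {i} \<noteq> AI" "AK - {k} \<noteq> AK" using that by auto
        show "SS cmp AI AK \<inter> SS cmp (AI-{i}) AK = {}" using ne unfolding SS_def by blast
        show "(SS cmp AI AK \<union> SS cmp (AI-{i}) AK) \<inter> SS cmp AI (AK-{k}) = {}" using ne unfolding SS_def by blast
        show "(SS cmp AI AK \<union> SS cmp (AI-{i}) AK \<union> SS cmp AI (AK-{k})) \<inter> SS cmp (AI-{i}) (AK-{k}) = {}" using ne unfolding SS_def by blast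
      qed
      have su: "w summable_on (SS cmp AI AK \<union> SS cmp (AI-{i}) AK)" "w summable_on (SS cmp AI AK \<union> SS cmp (AI-{i}) AK \<union> SS cmp AI (AK-{k}))"
        by (intro summable_on_subset_banach[OF summ] Un_least SS_sub)+
      show ?thesis unfolding U_def
        by (simp add: infsum_Un_disjoint[OF su(2) sS d1(3)] infsum_Un_disjoint[OF su(1) sS d1(2)]
          infsum_Un_disjoint[OF sS sS d1(1)])
    qed
    finally show ?thesis by simp
  qed
  have "D * ?W AI AK = (\<Sum>p\<in>AI\<times>AK. D * infsum (\<lambda>s. (w \<circ> f) (p,s)) (U p))"
    unfolding 1 2 by (simp add: sum_distrib_left)
  also have "\<dots> = (\<Sum>i\<in>AI. \<Sum>k\<in>AK. lam i * mu k * (?W AI AK + ?W (AI-{i}) AK + ?W AI (AK-{k}) + ?W (AI-{i}) (AK-{k})))"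
    unfolding sum.cartesian_product
  proof (rule sum.cong[OF refl])
    fix p assume "p \<in> AI \<times> AK"
    then obtain i k where p: "p = (i,k)" "i \<in> AI" "k \<in> AK" by auto
    have Dc: "D * cc i k = lam i * mu k" unfolding D_def cc_def using DK DI by (simp add: field_simps)
    show "D * infsum (\<lambda>s. (w \<circ> f) (p,s)) (U p) = (case p of (i,k) \<Rightarrow> lam i * mu k * (?W AI AK + ?W (AI-{i}) AK + ?W AI (AK-{k}) + ?W (AI-{i}) (AK-{k})))"
      unfolding p(1) 3[OF p(2,3)] by (simp add: Dc mult.assoc[symmetric])
  qed
  also have "\<dots> = sum lam AI * sum mu AK * ?W AI AK
   + sum mu AK * (\<Sum>i\<in>AI. lam i * ?W (AI - {i}) AK)
   + sum lam AI * (\<Sum>k\<in>AK. mu k * ?W AI (AK - {k}))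
   + (\<Sum>i\<in>AI. \<Sum>k\<in>AK. lam i * mu k * ?W (AI - {i}) (AK - {k}))"
    by (rule alg)
  finally show ?thesis unfolding D_def .
qed


theorem proposition1:
  fixes lam :: "'i::finite \<Rightarrow> real" and mu :: "'k::finite \<Rightarrow> real"
    and cmp :: "'i \<Rightarrow> 'k \<Rightarrow> bool"
    and AI :: "'i set" and AK :: "'k set"
  assumes conn: "graph_connected cmp"
    and lam_pos: "\<forall>i. lam i > 0" and mu_pos: "\<forall>k. mu k > 0"
    and lam_sum: "sum lam UNIV = 1" and mu_sum: "sum mu UNIV = 1"
    and stable: "\<forall>A. A \<noteq> {} \<and> A \<noteq> UNIV \<longrightarrow> sum lam A < sum mu (Kset cmp A)"
    and AI_ne: "AI \<noteq> {}" and AK_ne: "AK \<noteq> {}"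
    and indep: "\<forall>i\<in>AI. \<forall>k\<in>AK. \<not> cmp i k"
  shows "Delta lam mu cmp AI AK * piA lam mu cmp AI AK =
           sum mu AK * (\<Sum>i\<in>AI. lam i * piA lam mu cmp (AI - {i}) AK)
         + sum lam AI * (\<Sum>k\<in>AK. mu k * piA lam mu cmp AI (AK - {k}))
         + (\<Sum>i\<in>AI. \<Sum>k\<in>AK. lam i * mu k * piA lam mu cmp (AI - {i}) (AK - {k}))"
proof -
  define w where "w = weight lam mu cmp"
  define Z where "Z = infsum w (states cmp)"
  have piA_eq: "piA lam mu cmp X Y = infsum w (SS cmp X Y) / Z" for X Y
    unfolding piA_def stat_def SS_def w_def Z_def by (simp add: divide_inverse infsum_cmult_left')
  obtain i0 where i0: "i0 \<in> AI" using AI_ne by auto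
  obtain k0 where k0: "k0 \<in> AK" using AK_ne by auto
  have neK: "sum mu (Kset cmp AI) \<noteq> 0"
  proof -
    from conn have "(adj cmp)\<^sup>*\<^sup>* (Inl i0) (Inr k0)" unfolding graph_connected_def by blast
    then obtain y where "adj cmp (Inl i0) y" by (cases rule: converse_rtranclpE) auto
    then obtain k where "cmp i0 k" by (cases y) auto
    hence "k \<in> Kset cmp AI" using i0 unfolding Kset_def by auto
    hence "sum mu (Kset cmp AI) > 0" using mu_pos by (intro sum_pos2) (auto intro: less_imp_le)
    thus ?thesis by simp
  qed
  have neI: "sum lam (Iset cmp AK) \<noteq> 0"
  proof -
    from conn have "(adj cmp)\<^sup>*\<^sup>* (Inr k0) (Inl i0)" unfolding graph_connected_def by blast
    then obtain y where "adj cmp (Inr k0) y" by (cases rule: converse_rtranclpE) auto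
    then obtain i where "cmp i k0" by (cases y) auto
    hence "i \<in> Iset cmp AK" using k0 unfolding Iset_def by auto
    hence "sum lam (Iset cmp AK) > 0" using lam_pos by (intro sum_pos2) (auto intro: less_imp_le)
    thus ?thesis by simp
  qed
  show ?thesis
  proof (cases "w summable_on states cmp")
    case True
    have M: "sum mu (Kset cmp AI) * sum lam (Iset cmp AK) * infsum w (SS cmp AI AK) =
     sum lam AI * sum mu AK * infsum w (SS cmp AI AK)
   + sum mu AK * (\<Sum>i\<in>AI. lam i * infsum w (SS cmp (AI - {i}) AK))
   + sum lam AI * (\<Sum>k\<in>AK. mu k * infsum w (SS cmp AI (AK - {k})))
   + (\<Sum>i\<in>AI. \<Sum>k\<in>AK. lam i * mu k * infsum w (SS cmp (AI - {i}) (AK - {k})))"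
      unfolding w_def by (rule main_W[OF True[unfolded w_def] AI_ne AK_ne indep neK neI])
    have E: "Delta lam mu cmp AI AK * infsum w (SS cmp AI AK) =
       sum mu AK * (\<Sum>i\<in>AI. lam i * infsum w (SS cmp (AI - {i}) AK))
     + sum lam AI * (\<Sum>k\<in>AK. mu k * infsum w (SS cmp AI (AK - {k})))
     + (\<Sum>i\<in>AI. \<Sum>k\<in>AK. lam i * mu k * infsum w (SS cmp (AI - {i}) (AK - {k})))"
      unfolding Delta_def left_diff_distrib M by simp
    show ?thesis
      unfolding piA_eq
      by (simp add: sum_divide_distrib[symmetric] add_divide_distrib[symmetric] E[symmetric])
  next
    case False
    hence "Z = 0" unfolding Z_def by (rule infsum_not_exists)
    thus ?thesis unfolding piA_eq by simp
  qed
qed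

end
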